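(* Let $k,l\in\mathbb{N}$, fix norms $\|\cdot\|$ on $\mathbb{R}^k$ and $\mathbb{R}^l$, and identify $\mathbb{E}^{k+l} = [-\infty,\infty]^{k+l}\setminus\{0\}$ with $([-\infty,\infty]^k\times[-\infty,\infty]^l)\setminus\{(0,0)\}$. Every Radon measure $\mu$ on $\mathbb{E}^{k+l}$ is uniquely determined by the values $\mu(f)=\int f\,d\mu$ for $f$ ranging over $\mathcal{F}_1\cup\mathcal{F}_2$, where \[ \mathcal{F}_1 = \{f\in C_K(\mathbb{E}^{k+l}) \mid \exists u\in(0,\infty): \|y_1\|\le u \Rightarrow f(y_1,y_2)=0\}, \] \[ \mathcal{F}_2 = \{f\in C_K(\mathbb{E}^{k+l}) \mid f(y_1,y_2)=f(0,y_2) \text{ for all } (y_1,y_2)\}. \]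
   Context: A subset of $\mathbb{E}^{k+l}$ is compact iff it is closed in $[-\infty,\infty]^{k+l}$ and does not contain the origin; a Radon measure on $\mathbb{E}^{k+l}$ is a Borel measure finite on compact sets. $C_K(\mathbb{E}^{k+l})$ denotes the continuous real functions with compact support in $\mathbb{E}^{k+l}$. Here $y_1\in[-\infty,\infty]^k$, $y_2\in[-\infty,\infty]^l$ (with the norm extended as $+\infty$ at infinite points). *)

theory Defs
  imports "HOL-Analysis.Analysis" "HOL-Library.Extended_Real"
begin

type_synonym ('k,'l) pt = "(ereal ^ 'k) \<times> (ereal ^ 'l)"

definition Espace :: "('k::finite,'l::finite) pt set" where
  "Espace = UNIV - {(0, 0)}"

definition is_norm :: "(real ^ 'k::finite \<Rightarrow> real) \<Rightarrow> bool" where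
  "is_norm N \<longleftrightarrow> (\<forall>x. N x = 0 \<longleftrightarrow> x = 0) \<and> (\<forall>x y. N (x + y) \<le> N x + N y)
     \<and> (\<forall>c x. N (c *\<^sub>R x) = \<bar>c\<bar> * N x)"

definition ext_norm :: "(real ^ 'k::finite \<Rightarrow> real) \<Rightarrow> ereal ^ 'k \<Rightarrow> ereal" where
  "ext_norm N y = (if (\<forall>i. \<bar>y $ i\<bar> \<noteq> \<infinity>) then ereal (N (\<chi> i. real_of_ereal (y $ i))) else \<infinity>)"

text \<open>Compact subsets of E: closed in [-inf,inf]^(k+l) and not containing the origin.\<close>
definition E_compact :: "('k::finite,'l::finite) pt set \<Rightarrow> bool" where
  "E_compact K \<longleftrightarrow> closed K \<and> (0, 0) \<notin> K"

definition radon :: "('k::finite,'l::finite) pt measure \<Rightarrow> bool" where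
  "radon M \<longleftrightarrow> space M = Espace \<and> sets M = sets (restrict_space borel Espace)
     \<and> (\<forall>K. E_compact K \<longrightarrow> emeasure M K < \<infinity>)"

text \<open>C_K(E): continuous real functions on E with compact support in E
  (represented as functions on the whole cube, set to 0 at the origin).\<close>
definition CK :: "(('k::finite,'l::finite) pt \<Rightarrow> real) set" where
  "CK = {f. continuous_on Espace f \<and> (\<exists>K. E_compact K \<and> (\<forall>x\<in>Espace - K. f x = 0))
            \<and> (\<forall>x. x \<notin> Espace \<longrightarrow> f x = 0)}"

definition F1 :: "(real ^ 'k::finite \<Rightarrow> real) \<Rightarrow> (('k,'l::finite) pt \<Rightarrow> real) set" where
  "F1 N = {f \<in> CK. \<exists>u::real. 0 < u \<and>
             (\<forall>y1 y2. ext_norm N y1 \<le> ereal u \<longrightarrow> f (y1, y2) = 0)}"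

definition F2 :: "(('k::finite,'l::finite) pt \<Rightarrow> real) set" where
  "F2 = {f \<in> CK. \<forall>y1 y2. f (y1, y2) = f (0, y2)}"

end

theory Submission
  imports Defs
begin


lemma compact_UNIV_fun_ereal: "compact (UNIV :: ('k \<Rightarrow> ereal) set)"
proof -
  have "compact_space (product_topology (\<lambda>i. euclidean::ereal topology) (UNIV::'k set))"
  proof -
    have "compact_space (euclidean::ereal topology)"
      by (simp add: compact_space_def compact_UNIV)
    then show ?thesis by (simp add: compact_space_product_topology)
  qed
  then show ?thesis
    by (simp add: euclidean_product_topology compact_space_def del: compactin_euclidean_iff) simp
qed

lemma compact_UNIV_vec_ereal: "compact (UNIV :: (ereal ^ 'k::finite) set)"
proof -
  have "continuous_on UNIV (\<lambda>f::'k \<Rightarrow> ereal. \<chi> i. f i)"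
    by (intro continuous_on_vec_lambda continuous_on_product_coordinates)
  then have "compact ((\<lambda>f::'k \<Rightarrow> ereal. \<chi> i. f i) ` UNIV)"
    using compact_UNIV_fun_ereal compact_continuous_image by blast
  moreover have "(\<lambda>f::'k \<Rightarrow> ereal. \<chi> i. f i) ` UNIV = UNIV"
    by (metis surj_def vec_lambda_eta)
  ultimately show ?thesis by simp
qed

lemma compact_UNIV_pt: "compact (UNIV :: ('k::finite,'l::finite) pt set)"
  using compact_Times[OF compact_UNIV_vec_ereal compact_UNIV_vec_ereal] by simp

definition phi :: "ereal \<Rightarrow> real" where
  "phi x = real_of_ereal (inverse (max 0 (-x) + 1)) - real_of_ereal (inverse (max 0 x + 1))"

lemma phi_ereal: "phi (ereal r) = r / (1 + \<bar>r\<bar>)"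
  by (cases "r \<ge> 0") (auto simp: phi_def max_def field_simps)

lemma phi_inf[simp]: "phi \<infinity> = 1" "phi (-\<infinity>) = -1"
  by (auto simp: phi_def)

lemma phi_0[simp]: "phi 0 = 0"
  using phi_ereal[of 0] by (simp add: zero_ereal_def)

lemma cont_aux: "continuous_on UNIV (\<lambda>x::ereal. real_of_ereal (inverse (max 0 x + 1)))"
proof -
  have c1: "continuous_on UNIV (\<lambda>x::ereal. max 0 x + 1)"
    unfolding continuous_on_def
    by (auto intro!: tendsto_add_ereal_general1 tendsto_max tendsto_ident_at)
  have c2: "continuous_on UNIV (\<lambda>x::ereal. inverse (max 0 x + 1))"
    by (rule continuous_on_compose2[OF continuous_on_inverse_ereal c1]) auto
  have "\<bar>inverse (max 0 x + 1)\<bar> \<noteq> \<infinity>" for x :: ereal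
    by (cases x) (auto simp: max_def)
  then show ?thesis
    using c2 continuous_on_iff_real[of UNIV "\<lambda>x::ereal. inverse (max 0 x + 1)"] by (simp add: comp_def)
qed

lemma continuous_phi: "continuous_on UNIV phi"
  unfolding phi_def
  by (intro continuous_on_diff continuous_on_compose2[OF cont_aux] continuous_intros) auto



lemma phi_fin_inj:
  assumes "r / (1 + \<bar>r\<bar>) = s / (1 + \<bar>s\<bar>)" shows "r = (s::real)"
proof -
  have p: "1 + \<bar>r\<bar> > 0" "1 + \<bar>s\<bar> > 0" by auto
  have e: "r * (1 + \<bar>s\<bar>) = s * (1 + \<bar>r\<bar>)"
    using assms p by (simp add: divide_eq_eq eq_divide_eq)
  show ?thesis
  proof (cases "r \<ge> 0")
    case True
    show ?thesis
    proof (cases "s \<ge> 0")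
      case True with \<open>r \<ge> 0\<close> e show ?thesis by (simp add: algebra_simps)
    next
      case False with \<open>r \<ge> 0\<close> e show ?thesis
        by (smt (verit) mult_nonneg_nonneg mult_neg_pos)
    qed
  next
    case False
    show ?thesis
    proof (cases "s \<ge> 0")
      case True with \<open>\<not> r \<ge> 0\<close> e show ?thesis
        by (smt (verit) mult_nonneg_nonneg mult_neg_pos)
    next
      case False with \<open>\<not> r \<ge> 0\<close> e show ?thesis by (simp add: algebra_simps)
    qed
  qed
qed

lemma phi_fin_lt1: "\<bar>r / (1 + \<bar>r\<bar>)\<bar> < (1::real)"
proof -
  have "1 + \<bar>r\<bar> > 0" by auto
  then show ?thesis by (simp add: abs_div divide_less_eq)
qed

lemma phi_cases: "phi x = 1 \<longleftrightarrow> x = \<infinity>" "phi x = -1 \<longleftrightarrow> x = -\<infinity>"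
proof -
  have a: "phi (ereal r) \<noteq> 1" "phi (ereal r) \<noteq> -1" for r
  proof -
    have l: "\<bar>phi (ereal r)\<bar> < 1" using phi_fin_lt1[of r] by (simp add: phi_ereal)
    show "phi (ereal r) \<noteq> 1" using l by auto
    show "phi (ereal r) \<noteq> -1" using l by auto
  qed
  show "phi x = 1 \<longleftrightarrow> x = \<infinity>" by (cases x) (use a in auto)
  show "phi x = -1 \<longleftrightarrow> x = -\<infinity>" by (cases x) (use a in auto)
qed

lemma inj_phi: "inj phi"
proof (rule injI)
  fix x y assume e: "phi x = phi y"
  show "x = y"
  proof (cases x)
    case (real r) note xr = this
    show ?thesis
    proof (cases y)
      case (real s) with xr e show ?thesis by (metis phi_ereal phi_fin_inj)
    next
      case PInf with e phi_cases(1)[of x] show ?thesis by simp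
    next
      case MInf with e phi_cases(2)[of x] show ?thesis by simp
    qed
  next
    case PInf
    then show ?thesis using e phi_cases(1)[of y] by simp
  next
    case MInf
    then show ?thesis using e phi_cases(2)[of y] by simp
  qed
qed

lemma phi_le: "\<bar>phi (ereal r)\<bar> \<le> \<bar>r\<bar>"
proof -
  have "1 + \<bar>r\<bar> \<ge> 1" by auto
  then have "\<bar>r\<bar> / (1 + \<bar>r\<bar>) \<le> \<bar>r\<bar>"
    by (simp add: divide_le_eq mult_le_cancel_left1)
  then show ?thesis by (simp add: phi_ereal abs_div)
qed

definition Phi :: "('k::finite,'l::finite) pt \<Rightarrow> (real^'k) \<times> (real^'l)" where
  "Phi p = ((\<chi> i. phi (fst p $ i)), (\<chi> j. phi (snd p $ j)))"

lemma continuous_Phi: "continuous_on UNIV Phi"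
  unfolding Phi_def
  by (intro continuous_on_Pair continuous_on_vec_lambda
       continuous_on_compose2[OF continuous_phi] continuous_intros) auto

lemma inj_Phi: "inj Phi"
proof (rule injI)
  fix x y :: "('k::finite,'l::finite) pt" assume "Phi x = Phi y"
  then have "\<And>i. phi (fst x $ i) = phi (fst y $ i)" "\<And>j. phi (snd x $ j) = phi (snd y $ j)"
    unfolding Phi_def by (auto simp: vec_eq_iff)
  then have "\<And>i. fst x $ i = fst y $ i" "\<And>j. snd x $ j = snd y $ j"
    using inj_phi by (auto dest: injD)
  then show "x = y" by (simp add: prod_eq_iff vec_eq_iff)
qed

lemma Phi_0[simp]: "Phi (0,0) = 0"
  by (simp add: Phi_def zero_prod_def vec_eq_iff)

lemma Phi_eq_0: "Phi x = 0 \<longleftrightarrow> x = (0,0)"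
  using inj_Phi Phi_0 by (metis injD)

lemma closed_Phi_image: "closed K \<Longrightarrow> closed (Phi ` K)"
  by (metis compact_imp_closed closed_Int_compact compact_UNIV_pt Int_UNIV_right
      compact_continuous_image continuous_on_subset continuous_Phi subset_UNIV)

lemma Phi_in_image: "Phi x \<in> Phi ` K \<longleftrightarrow> x \<in> K"
  using inj_Phi by (auto dest: injD)



lemma norm_lower:
  fixes N :: "real^'k::finite \<Rightarrow> real"
  assumes "is_norm N" shows "\<exists>c>0. \<forall>x. c * norm x \<le> N x"
proof -
  have N0: "N x = 0 \<longleftrightarrow> x = 0" for x using assms by (simp add: is_norm_def)
  have Ntri: "N (x + y) \<le> N x + N y" for x y using assms by (simp add: is_norm_def)
  have Nh: "N (c *\<^sub>R x) = \<bar>c\<bar> * N x" for c x using assms by (simp add: is_norm_def)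
  have Nneg: "N (- x) = N x" for x using Nh[of "-1" x] by simp
  have Npos: "N x \<ge> 0" for x
  proof -
    have "0 = N (x + - x)" using N0 by simp
    also have "\<dots> \<le> N x + N (- x)" by (rule Ntri)
    finally show ?thesis using Nneg[of x] by simp
  qed
  have Nsum: "N (\<Sum>i\<in>S. f i) \<le> (\<Sum>i\<in>S. N (f i))" if "finite S" for S and f :: "'k \<Rightarrow> real^'k"
    using that
  proof (induction S rule: finite_induct)
    case empty then show ?case using N0[of 0] by simp
  next
    case (insert a S)
    then show ?case using Ntri[of "f a" "sum f S"] by simp
  qed
  define C where "C = (\<Sum>i\<in>UNIV. N (axis i (1::real)))"
  have exp: "x = (\<Sum>i\<in>UNIV. x$i *\<^sub>R axis i (1::real))" for x :: "real^'k"
    by (simp add: vec_eq_iff sum_component axis_def if_distrib cong: if_cong)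
  have up: "N x \<le> C * norm x" for x
  proof -
    have "N x = N (\<Sum>i\<in>UNIV. x$i *\<^sub>R axis i (1::real))" using exp[of x] by simp
    also have "\<dots> \<le> (\<Sum>i\<in>UNIV. N (x$i *\<^sub>R axis i (1::real)))" by (rule Nsum) simp
    also have "\<dots> = (\<Sum>i\<in>UNIV. \<bar>x$i\<bar> * N (axis i (1::real)))" by (simp add: Nh)
    also have "\<dots> \<le> (\<Sum>i\<in>UNIV. norm x * N (axis i (1::real)))"
      by (intro sum_mono mult_right_mono component_le_norm_cart Npos)
    also have "\<dots> = C * norm x" by (simp add: C_def sum_distrib_left mult.commute)
    finally show ?thesis .
  qed
  have C0: "C \<ge> 0" unfolding C_def by (intro sum_nonneg Npos)
  have lip: "\<bar>N x - N y\<bar> \<le> C * dist x y" for x y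
  proof -
    have "N x \<le> N (x - y) + N y" using Ntri[of "x - y" y] by simp
    moreover have "N y \<le> N (y - x) + N x" using Ntri[of "y - x" x] by simp
    moreover have "N (y - x) = N (x - y)" using Nneg[of "x - y"] by simp
    ultimately have "\<bar>N x - N y\<bar> \<le> N (x - y)" by linarith
    also have "\<dots> \<le> C * dist x y" using up[of "x - y"] by (simp add: dist_norm)
    finally show ?thesis .
  qed
  have cont: "continuous_on UNIV N"
  proof (clarsimp simp: continuous_on_iff)
    fix x :: "real^'k" and e :: real assume "e > 0"
    show "\<exists>d>0. \<forall>x'. dist x' x < d \<longrightarrow> dist (N x') (N x) < e"
    proof (intro exI[of _ "e / (C + 1)"] conjI allI impI)
      show "e / (C + 1) > 0" using \<open>e > 0\<close> C0 by simp
      fix x' assume d: "dist x' x < e / (C + 1)"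
      have "dist (N x') (N x) \<le> C * dist x' x" using lip[of x' x] by (simp add: dist_real_def)
      also have "\<dots> \<le> (C + 1) * dist x' x" by (simp add: mult_right_mono)
      also have "\<dots> < (C + 1) * (e / (C + 1))"
        using d C0 by (intro mult_strict_left_mono) auto
      also have "\<dots> = e" using C0 by simp
      finally show "dist (N x') (N x) < e" .
    qed
  qed
  obtain i0 :: 'k where True by simp
  have ne: "sphere (0::real^'k) 1 \<noteq> {}"
    using norm_axis_1[of i0] by (auto simp: sphere_def dist_norm intro!: exI[of _ "axis i0 1"])
  obtain z where z: "z \<in> sphere 0 1" and zmin: "\<forall>y\<in>sphere 0 1. N z \<le> N y"
    using continuous_attains_inf[OF compact_sphere ne continuous_on_subset[OF cont]] by blast
  have "z \<noteq> 0" using z by auto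
  then have cpos: "N z > 0" using N0 Npos by (metis less_eq_real_def)
  show ?thesis
  proof (intro exI[of _ "N z"] conjI allI cpos)
    fix x :: "real^'k"
    show "N z * norm x \<le> N x"
    proof (cases "x = 0")
      case True then show ?thesis using N0[of 0] by simp
    next
      case False
      then have nx: "norm x > 0" by simp
      have "(inverse (norm x)) *\<^sub>R x \<in> sphere 0 1" using nx by (simp add: sphere_def dist_norm)
      then have "N z \<le> N ((inverse (norm x)) *\<^sub>R x)" using zmin by blast
      also have "\<dots> = N x / norm x" using nx by (simp add: Nh field_simps)
      finally show ?thesis using nx by (simp add: le_divide_eq mult.commute)
    qed
  qed
qed


lemma ext_norm_small:
  fixes N :: "real^'k::finite \<Rightarrow> real"
  assumes c: "c > 0" "\<forall>x. c * norm x \<le> N x" and le: "ext_norm N y \<le> ereal u"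
  shows "norm (\<chi> i. phi (y$i)) \<le> real CARD('k) * (u / c)"
proof -
  have fin: "\<forall>i. \<bar>y $ i\<bar> \<noteq> \<infinity>"
    using le by (auto simp: ext_norm_def split: if_splits)
  define x where "x = (\<chi> i. real_of_ereal (y $ i))"
  have yx: "y $ i = ereal (x $ i)" for i using fin by (simp add: x_def ereal_real')
  have "N x \<le> u" using le fin by (simp add: ext_norm_def x_def)
  then have nx: "norm x \<le> u / c" using c by (simp add: le_divide_eq mult.commute) (smt (verit) mult.commute)
  have "norm (\<chi> i. phi (y$i)) \<le> (\<Sum>i\<in>UNIV. \<bar>(\<chi> i. phi (y$i)) $ i\<bar>)" by (rule norm_le_l1_cart)
  also have "\<dots> \<le> (\<Sum>i\<in>(UNIV::'k set). u / c)"
  proof (intro sum_mono)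
    fix i :: 'k
    have "\<bar>phi (y $ i)\<bar> \<le> \<bar>x $ i\<bar>" using phi_le[of "x$i"] by (simp add: yx)
    also have "\<dots> \<le> norm x" by (rule component_le_norm_cart)
    finally show "\<bar>(\<chi> i. phi (y$i)) $ i\<bar> \<le> u / c" using nx by simp
  qed
  also have "\<dots> = real CARD('k) * (u / c)" by simp
  finally show ?thesis .
qed

lemma Espace_eq: "Espace = - {(0,0)}" by (auto simp: Espace_def)

lemma closed_zero_vec: "closed {0::ereal^'k::finite}"
proof -
  have "{0::ereal^'k} = {x. \<forall>i. x $ i \<in> {0}}" by (auto simp: vec_eq_iff)
  then show ?thesis using closed_vector_box[of "\<lambda>_. {0::ereal}"] by simp
qed

lemma closed_origin: "closed {(0::ereal^'k::finite, 0::ereal^'l::finite)}"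
  using closed_Times[OF closed_zero_vec closed_zero_vec] by simp

lemma open_Espace: "open Espace" unfolding Espace_eq by (intro open_Compl closed_origin)

lemma Espace_borel: "Espace \<in> sets borel" by (simp add: open_Espace)

lemma E_compact_sub: "E_compact K \<Longrightarrow> K \<subseteq> Espace"
  by (auto simp: E_compact_def Espace_def)

lemma radon_sets_iff: "radon M \<Longrightarrow> A \<in> sets M \<longleftrightarrow> A \<subseteq> Espace \<and> A \<in> sets borel"
proof -
  assume "radon M"
  then have "sets M = sets (restrict_space borel Espace)" by (simp add: radon_def)
  moreover have "Espace \<inter> space borel \<in> sets borel" using Espace_borel by simp
  ultimately show ?thesis using sets_restrict_space_iff by metis
qed

lemma E_compact_sets: "radon M \<Longrightarrow> E_compact K \<Longrightarrow> K \<in> sets M"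
  by (simp add: radon_sets_iff E_compact_sub) (simp add: E_compact_def)

lemma CK_cont: assumes "f \<in> CK" shows "continuous_on UNIV f"
proof -
  obtain K where K: "E_compact K" "\<forall>x\<in>Espace - K. f x = 0"
    using assms by (auto simp: CK_def)
  have c1: "continuous_on Espace f" using assms by (simp add: CK_def)
  have z: "\<forall>x\<in>- K. f x = 0" using K assms by (auto simp: CK_def)
  have c2: "continuous_on (- K) f"
    using continuous_on_cong[of "- K" "- K" f "\<lambda>_. 0"] z by (simp add: continuous_on_const)
  have "Espace \<union> - K = UNIV" using K(1) by (auto simp: E_compact_def Espace_def)
  moreover have "open (- K)" using K(1) by (auto simp: E_compact_def)
  ultimately show ?thesis using continuous_on_open_Un[OF open_Espace \<open>open (- K)\<close> c1 c2] by simp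
qed

lemma CK_meas: assumes "radon M" "f \<in> CK" shows "f \<in> borel_measurable M"
proof -
  have "f \<in> borel_measurable borel"
    using CK_cont[OF assms(2)] by (rule borel_measurable_continuous_onI)
  then have "f \<in> borel_measurable (restrict_space borel Espace)"
    by (rule measurable_restrict_space1)
  then show ?thesis using assms(1) unfolding radon_def
    by (metis measurable_cong_sets)
qed

lemma CK_bound: assumes "f \<in> CK"
  shows "\<exists>K B. E_compact K \<and> (\<forall>x. \<bar>f x\<bar> \<le> B * indicator K x)"
proof -
  obtain K where K: "E_compact K" "\<forall>x\<in>Espace - K. f x = 0"
    using assms by (auto simp: CK_def)
  have z: "\<forall>x. x \<notin> K \<longrightarrow> f x = 0" using K assms by (auto simp: CK_def)
  have "compact K" using K(1) compact_UNIV_pt closed_Int_compact[of K UNIV]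
    by (auto simp: E_compact_def)
  then have "compact (f ` K)"
    using compact_continuous_image continuous_on_subset[OF CK_cont[OF assms]] by blast
  then obtain B where B: "\<forall>y\<in>f ` K. norm y \<le> B" using compact_imp_bounded bounded_iff by metis
  have "\<bar>f x\<bar> \<le> B * indicator K x" for x
  proof (cases "x \<in> K")
    case True then show ?thesis using B by auto
  next
    case False
    then have "f x = 0" using z by blast
    then show ?thesis using False by simp
  qed
  with K show ?thesis by blast
qed

lemma CK_int: assumes "radon M" "f \<in> CK" shows "integrable M f"
proof -
  obtain K B where K: "E_compact K" "\<forall>x. \<bar>f x\<bar> \<le> B * indicator K x"
    using CK_bound[OF assms(2)] by blast
  have fin: "emeasure M K < \<infinity>" using assms(1) K(1) by (simp add: radon_def)
  have Ks: "K \<in> sets M" using E_compact_sets[OF assms(1) K(1)] .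
  have "integrable M (\<lambda>x. B * indicator K x :: real)"
    using fin Ks by (intro integrable_mult_right integrable_real_indicator) auto
  then show ?thesis
  proof (rule Bochner_Integration.integrable_bound)
    show "f \<in> borel_measurable M" using CK_meas[OF assms] .
    show "AE x in M. norm (f x) \<le> norm (B * indicator K x :: real)"
    proof (intro AE_I2)
      fix x
      have "\<bar>f x\<bar> \<le> B * indicator K x" using K(2) by blast
      also have "\<dots> \<le> \<bar>B * indicator K x\<bar>" by simp
      finally show "norm (f x) \<le> norm (B * indicator K x :: real)" by simp
    qed
  qed
qed



lemma lim_eq:
  fixes f w :: "'a \<Rightarrow> real" and s :: "nat \<Rightarrow> 'a \<Rightarrow> real"
  assumes "f \<in> borel_measurable M" "f \<in> borel_measurable M'"
    "\<And>i. s i \<in> borel_measurable M" "\<And>i. s i \<in> borel_measurable M'"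
    "integrable M w" "integrable M' w"
    "\<And>x. (\<lambda>i. s i x) \<longlonglongrightarrow> f x" "\<And>i x. \<bar>s i x\<bar> \<le> w x"
    "\<And>i. (\<integral>x. s i x \<partial>M) = (\<integral>x. s i x \<partial>M')"
  shows "(\<integral>x. f x \<partial>M) = (\<integral>x. f x \<partial>M')"
proof -
  have 1: "(\<lambda>i. \<integral>x. s i x \<partial>M) \<longlonglongrightarrow> (\<integral>x. f x \<partial>M)"
    by (rule integral_dominated_convergence[where w=w]) (use assms in auto)
  have 2: "(\<lambda>i. \<integral>x. s i x \<partial>M) \<longlonglongrightarrow> (\<integral>x. f x \<partial>M')"
    unfolding assms(9)
    by (rule integral_dominated_convergence[where w=w]) (use assms in auto)
  show ?thesis using LIMSEQ_unique[OF 1 2] .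
qed

definition A0 :: "('k::finite,'l::finite) pt set" where "A0 = {x. fst x \<noteq> 0}"

lemma open_A0: "open A0"
proof -
  have "A0 = (- {0}) \<times> UNIV" by (auto simp: A0_def)
  show ?thesis unfolding \<open>A0 = (- {0}) \<times> UNIV\<close> by (intro open_Times open_Compl closed_zero_vec open_UNIV)
qed

lemma A0_sets: "radon M \<Longrightarrow> A0 \<in> sets M"
  by (simp add: radon_sets_iff open_A0) (auto simp: A0_def Espace_def)

lemma fst_Phi: "fst (Phi x) = (\<chi> i. phi (fst x $ i))"
  by (simp add: Phi_def)

lemma fst_Phi_0: "fst (Phi x) = 0 \<longleftrightarrow> fst x = 0"
proof -
  have "fst (Phi x) = 0 \<longleftrightarrow> (\<forall>i. phi (fst x $ i) = 0)" by (simp add: fst_Phi vec_eq_iff)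
  also have "\<dots> \<longleftrightarrow> (\<forall>i. fst x $ i = 0)" using inj_phi phi_0 by (metis injD)
  finally show ?thesis by (simp add: vec_eq_iff)
qed

definition psi :: "nat \<Rightarrow> ('k::finite,'l::finite) pt \<Rightarrow> real" where
  "psi n x = max 0 (min 1 (real (Suc n) * norm (fst (Phi x)) - 1))"

lemma continuous_psi: "continuous_on UNIV (psi n)"
  unfolding psi_def
  by (intro continuous_intros continuous_on_compose2[OF continuous_Phi]) auto

lemma psi_lim: "(\<lambda>n. psi n x) \<longlonglongrightarrow> indicator A0 x"
proof (cases "fst x = 0")
  case True
  then have "fst (Phi x) = 0" using fst_Phi_0 by blast
  then have "psi n x = 0" for n by (simp add: psi_def)
  then show ?thesis using True by (simp add: A0_def)
next
  case False
  define a where "a = norm (fst (Phi x))"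
  have a: "a > 0" using False fst_Phi_0[of x] by (simp add: a_def)
  obtain n0 :: nat where n0: "2 / a < n0" using reals_Archimedean2 by blast
  have "psi n x = 1" if "n \<ge> n0" for n
  proof -
    have "2 / a < real (Suc n)" using n0 that by linarith
    then have "2 < real (Suc n) * a" using a by (simp add: divide_less_eq)
    then show ?thesis by (simp add: psi_def a_def[symmetric])
  qed
  then have "eventually (\<lambda>n. psi n x = 1) sequentially" by (auto simp: eventually_sequentially)
  then show ?thesis using False by (simp add: A0_def tendsto_eventually)
qed

lemma psi_bound: "\<bar>psi n x\<bar> \<le> 1" by (simp add: psi_def)

lemma f_psi_CK:
  assumes f: "f \<in> CK"
  shows "(\<lambda>x. f x * psi n x) \<in> CK"
proof -
  obtain K where K: "E_compact K" "\<forall>x\<in>Espace - K. f x = 0" using f by (auto simp: CK_def)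
  show ?thesis
    unfolding CK_def
  proof (intro CollectI conjI)
    show "continuous_on Espace (\<lambda>x. f x * psi n x)"
      using continuous_on_subset[OF CK_cont[OF f]] continuous_on_subset[OF continuous_psi]
      by (intro continuous_on_mult) auto
    show "\<exists>K. E_compact K \<and> (\<forall>x\<in>Espace - K. f x * psi n x = 0)" using K by auto
    show "\<forall>x. x \<notin> Espace \<longrightarrow> f x * psi n x = 0" using f by (auto simp: CK_def)
  qed
qed

lemma f_psi_F1:
  fixes N1 :: "real^'k::finite \<Rightarrow> real"
  assumes N: "is_norm N1" and f: "f \<in> CK"
  shows "(\<lambda>x. f x * psi n x) \<in> F1 N1"
proof -
  obtain c where c: "c > 0" "\<forall>x. c * norm x \<le> N1 x" using norm_lower[OF N] by blast
  have CK: "(\<lambda>x. f x * psi n x) \<in> CK" using f_psi_CK[OF f] .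
  define u where "u = c / (real CARD('k) * real (Suc n))"
  have cp: "real CARD('k) > 0" by simp
  have u: "u > 0" using c cp by (simp add: u_def)
  have "f (y1, y2) * psi n (y1, y2) = 0" if le: "ext_norm N1 y1 \<le> ereal u" for y1 y2
  proof -
    have "norm (\<chi> i. phi (y1$i)) \<le> real CARD('k) * (u / c)" by (rule ext_norm_small[OF c le])
    also have "\<dots> = 1 / real (Suc n)"
    proof -
      have "c * real CARD('k) + c * (real n * real CARD('k)) > 0"
        using c cp by (intro add_pos_nonneg mult_pos_pos mult_nonneg_nonneg) auto
      then show ?thesis using c cp by (simp add: u_def field_simps)
    qed
    finally have "real (Suc n) * norm (fst (Phi (y1, y2))) \<le> 1"
      by (simp add: fst_Phi field_simps)
    then have "psi n (y1, y2) = 0" by (simp add: psi_def)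
    then show ?thesis by simp
  qed
  with CK u show ?thesis unfolding F1_def by blast
qed

lemma D1:
  fixes N1 :: "real^'k::finite \<Rightarrow> real" and M M' :: "('k,'l::finite) pt measure"
  assumes N: "is_norm N1" and R: "radon M" "radon M'"
    and eq: "\<forall>f\<in>F1 N1. (\<integral>x. f x \<partial>M) = (\<integral>x. f x \<partial>M')" and f: "f \<in> CK"
  shows "(\<integral>x. f x * indicator A0 x \<partial>M) = (\<integral>x. f x * indicator A0 x \<partial>M')"
proof (rule lim_eq[where s="\<lambda>n x. f x * psi n x" and w="\<lambda>x. \<bar>f x\<bar>"])
  show "(\<lambda>x. f x * indicator A0 x) \<in> borel_measurable M"
    using CK_meas[OF R(1) f] A0_sets[OF R(1)] by measurable
  show "(\<lambda>x. f x * indicator A0 x) \<in> borel_measurable M'"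
    using CK_meas[OF R(2) f] A0_sets[OF R(2)] by measurable
  show "(\<lambda>x. f x * psi n x) \<in> borel_measurable M" for n
    using CK_meas[OF R(1) f_psi_CK[OF f]] .
  show "(\<lambda>x. f x * psi n x) \<in> borel_measurable M'" for n
    using CK_meas[OF R(2) f_psi_CK[OF f]] .
  show "integrable M (\<lambda>x. \<bar>f x\<bar>)" using CK_int[OF R(1) f] by auto
  show "integrable M' (\<lambda>x. \<bar>f x\<bar>)" using CK_int[OF R(2) f] by auto
  show "(\<lambda>n. f x * psi n x) \<longlonglongrightarrow> f x * indicator A0 x" for x
    by (intro tendsto_mult tendsto_const psi_lim)
  show "\<bar>f x * psi n x\<bar> \<le> \<bar>f x\<bar>" for n x
    using psi_bound[of n x] by (simp add: abs_mult mult_left_le)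
  show "(\<integral>x. f x * psi n x \<partial>M) = (\<integral>x. f x * psi n x \<partial>M')" for n
    using eq f_psi_F1[OF N f] by blast
qed



lemma CK_zero: assumes "f \<in> CK" shows "\<exists>K. E_compact K \<and> (\<forall>x. x \<notin> K \<longrightarrow> f x = 0)"
proof -
  obtain K where K: "E_compact K" "\<forall>x\<in>Espace - K. f x = 0" using assms by (auto simp: CK_def)
  have "\<forall>x. x \<notin> K \<longrightarrow> f x = 0" using K assms by (auto simp: CK_def)
  with K show ?thesis by blast
qed

lemma h_CK:
  fixes f :: "('k::finite,'l::finite) pt \<Rightarrow> real"
  assumes f: "f \<in> CK" shows "(\<lambda>x::('k,'l) pt. f (0, snd x)) \<in> CK"
proof -
  obtain K where K: "E_compact K" "\<forall>x. x \<notin> K \<longrightarrow> f x = 0" using CK_zero[OF f] by blast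
  have cz: "continuous_on UNIV (\<lambda>x::('k,'l) pt. (0::ereal^'k, snd x))"
    by (intro continuous_intros)
  have cont: "continuous_on UNIV (\<lambda>x::('k,'l) pt. f (0, snd x))"
    by (rule continuous_on_compose2[OF CK_cont[OF f] cz]) auto
  define K' where "K' = (\<lambda>x::('k,'l) pt. (0::ereal^'k, snd x)) -` K"
  have "closed K'" unfolding K'_def
    using K(1) cz by (intro closed_vimage) (auto simp: E_compact_def)
  moreover have "(0,0) \<notin> K'" using K(1) by (auto simp: K'_def E_compact_def)
  ultimately have EK': "E_compact K'" by (simp add: E_compact_def)
  have f00: "f (0,0) = 0" using f by (auto simp: CK_def Espace_def)
  show ?thesis unfolding CK_def
  proof (intro CollectI conjI)
    show "continuous_on Espace (\<lambda>x::('k,'l) pt. f (0, snd x))" using continuous_on_subset[OF cont, of Espace] by simp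
    show "\<exists>K. E_compact K \<and> (\<forall>x::('k,'l) pt\<in>Espace - K. f (0, snd x) = 0)"
      using EK' K(2) by (intro exI[of _ K']) (auto simp: K'_def)
    show "\<forall>x::('k,'l) pt. x \<notin> Espace \<longrightarrow> f (0, snd x) = 0" using f00 by (auto simp: Espace_def)
  qed
qed

lemma all_CK:
  fixes N1 :: "real^'k::finite \<Rightarrow> real" and M M' :: "('k,'l::finite) pt measure"
  assumes N: "is_norm N1" and R: "radon M" "radon M'"
    and eq: "\<forall>f\<in>F1 N1 \<union> F2. (\<integral>x. f x \<partial>M) = (\<integral>x. f x \<partial>M')" and f: "f \<in> CK"
  shows "(\<integral>x. f x \<partial>M) = (\<integral>x. f x \<partial>M')"
proof -
  define h where "h = (\<lambda>x::('k,'l) pt. f (0, snd x))"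
  have hCK: "h \<in> CK" unfolding h_def by (rule h_CK[OF f])
  have hF2: "h \<in> F2" using hCK by (simp add: F2_def h_def)
  have eq1: "\<forall>g\<in>F1 N1. (\<integral>x. g x \<partial>M) = (\<integral>x. g x \<partial>M')" using eq by blast
  have dec: "f x = f x * indicator A0 x + (h x - h x * indicator A0 x)" for x
  proof (cases "fst x = 0")
    case True
    then have "x = (0, snd x)" by (simp add: prod_eq_iff)
    then have "f x = h x" unfolding h_def by metis
    then show ?thesis using True by (simp add: A0_def)
  qed (simp add: A0_def)
  have decomp: "(\<integral>x. f x \<partial>M2) = (\<integral>x. f x * indicator A0 x \<partial>M2) + ((\<integral>x. h x \<partial>M2) - (\<integral>x. h x * indicator A0 x \<partial>M2))"
    if R2: "radon M2" for M2 :: "('k,'l) pt measure"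
  proof -
    have i1: "integrable M2 (\<lambda>x. f x * indicator A0 x)"
      by (intro integrable_real_mult_indicator A0_sets R2 CK_int f)
    have i2: "integrable M2 h" by (intro CK_int R2 hCK)
    have i3: "integrable M2 (\<lambda>x. h x * indicator A0 x)"
      by (intro integrable_real_mult_indicator A0_sets R2 CK_int hCK)
    have "(\<integral>x. f x \<partial>M2) = (\<integral>x. f x * indicator A0 x + (h x - h x * indicator A0 x) \<partial>M2)"
      by (subst dec) (rule refl)
    also have "\<dots> = (\<integral>x. f x * indicator A0 x \<partial>M2) + (\<integral>x. h x - h x * indicator A0 x \<partial>M2)"
      using i1 i2 i3 by (intro Bochner_Integration.integral_add) auto
    also have "(\<integral>x. h x - h x * indicator A0 x \<partial>M2) = (\<integral>x. h x \<partial>M2) - (\<integral>x. h x * indicator A0 x \<partial>M2)"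
      using i2 i3 by (intro Bochner_Integration.integral_diff) auto
    finally show ?thesis .
  qed
  show ?thesis
    unfolding decomp[OF R(1)] decomp[OF R(2)]
    using D1[OF N R eq1 f] D1[OF N R eq1 hCK] eq hF2 by simp
qed



lemma compact_eq:
  fixes M M' :: "('k::finite,'l::finite) pt measure"
  assumes R: "radon M" "radon M'"
    and allCK: "\<And>f. f \<in> CK \<Longrightarrow> (\<integral>x. f x \<partial>M) = (\<integral>x. f x \<partial>M')"
    and K: "E_compact K"
  shows "emeasure M K = emeasure M' K"
proof (cases "K = {}")
  case True then show ?thesis by simp
next
  case False
  define L where "L = Phi ` K"
  have Lc: "closed L" using K closed_Phi_image by (auto simp: L_def E_compact_def)
  have Lne: "L \<noteq> {}" using False by (simp add: L_def)
  have L0: "0 \<notin> L" using K Phi_eq_0 by (force simp: L_def E_compact_def)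
  define d where "d = infdist 0 L"
  have d: "d > 0" using infdist_pos_not_in_closed[OF Lc Lne L0] by (simp add: d_def)
  obtain n0 :: nat where n0: "2 / d < n0" using reals_Archimedean2 by blast
  have n0p: "real n0 > 0" using n0 d by (smt (verit) divide_pos_pos)
  have n0d: "real n0 * d > 2" using n0 d by (simp add: divide_less_eq mult.commute)
  define g where "g n x = max 0 (1 - real (n + n0) * infdist (Phi x) L)" for n x
  define K0 where "K0 = {x. infdist (Phi x) L \<le> 1 / real n0}"
  have contD: "continuous_on UNIV (\<lambda>x::('k,'l) pt. infdist (Phi x) L)"
    by (intro continuous_on_infdist continuous_Phi)
  have "closed K0" unfolding K0_def
    by (intro closed_Collect_le contD continuous_on_const)
  moreover have "(0,0) \<notin> K0"
  proof
    assume "(0,0) \<in> K0"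
    then have "d \<le> 1 / real n0" by (simp add: K0_def d_def)
    then have "real n0 * d \<le> 1" using n0p by (simp add: le_divide_eq mult.commute)
    with n0d show False by simp
  qed
  ultimately have K0: "E_compact K0" by (simp add: E_compact_def)
  have gz: "g n x = 0" if "x \<notin> K0" for n x
  proof -
    have "1 / real n0 < infdist (Phi x) L" using that by (simp add: K0_def)
    then have "1 < real n0 * infdist (Phi x) L" using n0p by (simp add: divide_less_eq mult.commute)
    moreover have "real n0 * infdist (Phi x) L \<le> real (n + n0) * infdist (Phi x) L"
      by (intro mult_right_mono infdist_nonneg) simp
    ultimately show ?thesis by (simp add: g_def)
  qed
  have g01: "0 \<le> g n x" "g n x \<le> 1" for n x
    using infdist_nonneg[of "Phi x" L] by (auto simp: g_def)
  have gCK: "g n \<in> CK" for n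
    unfolding CK_def
  proof (intro CollectI conjI)
    show "continuous_on Espace (g n)" unfolding g_def
      by (intro continuous_intros continuous_on_subset[OF contD]) auto
    show "\<exists>K. E_compact K \<and> (\<forall>x\<in>Espace - K. g n x = 0)" using K0 gz by blast
    show "\<forall>x. x \<notin> Espace \<longrightarrow> g n x = 0"
      using gz \<open>(0,0) \<notin> K0\<close> by (auto simp: Espace_def)
  qed
  have glim: "(\<lambda>n. g n x) \<longlonglongrightarrow> indicator K x" for x
  proof (cases "x \<in> K")
    case True
    then have "Phi x \<in> L" by (simp add: L_def)
    then have "g n x = 1" for n by (simp add: g_def)
    then show ?thesis using True by simp
  next
    case False
    then have "Phi x \<notin> L" by (simp add: L_def Phi_in_image)
    then have e: "infdist (Phi x) L > 0" by (rule infdist_pos_not_in_closed[OF Lc Lne])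
    obtain n1 :: nat where n1: "1 / infdist (Phi x) L < n1" using reals_Archimedean2 by blast
    have "g n x = 0" if "n \<ge> n1" for n
    proof -
      have "1 < real n1 * infdist (Phi x) L" using n1 e by (simp add: divide_less_eq mult.commute)
      moreover have "real n1 * infdist (Phi x) L \<le> real (n + n0) * infdist (Phi x) L"
        using that e by (intro mult_right_mono) auto
      ultimately show ?thesis by (simp add: g_def)
    qed
    then have "eventually (\<lambda>n. g n x = 0) sequentially" by (auto simp: eventually_sequentially)
    then show ?thesis using False by (simp add: tendsto_eventually)
  qed
  have int_eq: "(\<integral>x. (indicator K x :: real) \<partial>M) = (\<integral>x. indicator K x \<partial>M')"
  proof (rule lim_eq[where s=g and w="indicator K0"])
    show "(indicator K :: _ \<Rightarrow> real) \<in> borel_measurable M"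
      using E_compact_sets[OF R(1) K] by simp
    show "(indicator K :: _ \<Rightarrow> real) \<in> borel_measurable M'"
      using E_compact_sets[OF R(2) K] by simp
    show "g i \<in> borel_measurable M" for i using CK_meas[OF R(1) gCK] .
    show "g i \<in> borel_measurable M'" for i using CK_meas[OF R(2) gCK] .
    show "integrable M (indicator K0 :: _ \<Rightarrow> real)"
      using E_compact_sets[OF R(1) K0] R(1) K0 by (intro integrable_real_indicator) (auto simp: radon_def)
    show "integrable M' (indicator K0 :: _ \<Rightarrow> real)"
      using E_compact_sets[OF R(2) K0] R(2) K0 by (intro integrable_real_indicator) (auto simp: radon_def)
    show "(\<lambda>i. g i x) \<longlonglongrightarrow> indicator K x" for x by (rule glim)
    show "\<bar>g i x\<bar> \<le> indicator K0 x" for i x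
      using g01[of i x] gz[of x i] by (cases "x \<in> K0") auto
    show "(\<integral>x. g i x \<partial>M) = (\<integral>x. g i x \<partial>M')" for i by (rule allCK[OF gCK])
  qed
  have sub: "K \<inter> space M = K" "K \<inter> space M' = K"
    using R E_compact_sub[OF K] by (auto simp: radon_def)
  have fin: "emeasure M K \<noteq> top" "emeasure M' K \<noteq> top"
    using R K by (auto simp: radon_def)
  have "measure M K = measure M' K" using int_eq sub by simp
  then show ?thesis using fin emeasure_eq_ennreal_measure by metis
qed


lemma sets_radon_gen:
  fixes M :: "('k::finite,'l::finite) pt measure"
  assumes R: "radon M"
  shows "sets M = sigma_sets Espace {K. E_compact K}"
proof (rule antisym)
  define A where "A i = {x::('k,'l) pt. 1 / real (Suc i) \<le> norm (Phi x)}" for i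
  have AE: "E_compact (A i)" for i
  proof -
    have "closed (A i)" unfolding A_def
      by (intro closed_Collect_le continuous_on_const continuous_on_norm continuous_Phi)
    moreover have "(0,0) \<notin> A i" by (simp add: A_def)
    ultimately show ?thesis by (simp add: E_compact_def)
  qed
  have Aun: "(\<Union>i. A i) = Espace"
  proof (intro equalityI subsetI)
    fix x assume "x \<in> (\<Union>i. A i)" then show "x \<in> Espace" using AE E_compact_sub by blast
  next
    fix x :: "('k,'l) pt" assume "x \<in> Espace"
    then have "Phi x \<noteq> 0" using Phi_eq_0[of x] by (simp add: Espace_def)
    then have "norm (Phi x) > 0" by simp
    then obtain n where n: "n > 0" "inverse (real n) < norm (Phi x)" using ex_inverse_of_nat_less by blast
    then have "Suc (n - 1) = n" by simp
    then have "x \<in> A (n - 1)" using n by (simp add: A_def inverse_eq_divide)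
    then show "x \<in> (\<Union>i. A i)" by blast
  qed
  have Eb: "Espace \<in> sigma_sets UNIV (Collect closed :: ('k,'l) pt set set)"
    using Espace_borel by (simp add: borel_eq_closed)
  have "sets M = sets (restrict_space borel Espace)" using R by (simp add: radon_def)
  also have "\<dots> = (\<inter>) Espace ` sets borel" by (rule sets_restrict_space)
  also have "sets borel = sigma_sets UNIV (Collect closed :: ('k,'l) pt set set)"
    by (simp add: borel_eq_closed)
  also have "(\<inter>) Espace ` sigma_sets UNIV (Collect closed :: ('k,'l) pt set set) = sigma_sets Espace ((\<inter>) Espace ` (Collect closed :: ('k,'l) pt set set))"
    using sigma_sets_Int[OF Eb] by simp
  also have "\<dots> \<subseteq> sigma_sets Espace {K. E_compact K}"
  proof (rule sigma_sets_mono, safe)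
    fix C :: "('k,'l) pt set" assume "closed C"
    have "Espace \<inter> C = (\<Union>i. C \<inter> A i)" using Aun by blast
    moreover have "C \<inter> A i \<in> sigma_sets Espace {K. E_compact K}" for i
      using AE[of i] \<open>closed C\<close> by (intro sigma_sets.Basic) (auto simp: E_compact_def)
    ultimately show "Espace \<inter> C \<in> sigma_sets Espace {K. E_compact K}"
      by (metis sigma_sets.Union)
  qed
  finally show "sets M \<subseteq> sigma_sets Espace {K. E_compact K}" .
next
  show "sigma_sets Espace {K. E_compact K} \<subseteq> sets M"
    using sets.sigma_sets_subset[of "{K. E_compact K}" M] E_compact_sets[OF R] R
    by (auto simp: radon_def)
qed

theorem lemma3p1:
  fixes N1 :: "real ^ 'k::finite \<Rightarrow> real" and N2 :: "real ^ 'l::finite \<Rightarrow> real"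
    and M M' :: "('k,'l) pt measure"
  assumes "is_norm N1" and "is_norm N2"
    and "radon M" and "radon M'"
    and "\<forall>f \<in> F1 N1 \<union> F2. (\<integral>x. f x \<partial>M) = (\<integral>x. f x \<partial>M')"
  shows "M = M'"
proof -
  define A where "A i = {x::('k,'l) pt. 1 / real (Suc i) \<le> norm (Phi x)}" for i
  have AE: "E_compact (A i)" for i
  proof -
    have "closed (A i)" unfolding A_def
      by (intro closed_Collect_le continuous_on_const continuous_on_norm continuous_Phi)
    moreover have "(0,0) \<notin> A i" by (simp add: A_def)
    ultimately show ?thesis by (simp add: E_compact_def)
  qed
  have Aun: "(\<Union>i. A i) = Espace"
  proof (intro equalityI subsetI)
    fix x assume "x \<in> (\<Union>i. A i)" then show "x \<in> Espace" using AE E_compact_sub by blast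
  next
    fix x :: "('k,'l) pt" assume "x \<in> Espace"
    then have "Phi x \<noteq> 0" using Phi_eq_0[of x] by (simp add: Espace_def)
    then have "norm (Phi x) > 0" by simp
    then obtain n where n: "n > 0" "inverse (real n) < norm (Phi x)" using ex_inverse_of_nat_less by blast
    then have "Suc (n - 1) = n" by simp
    then have "x \<in> A (n - 1)" using n by (simp add: A_def inverse_eq_divide)
    then show "x \<in> (\<Union>i. A i)" by blast
  qed
  have allCK: "(\<integral>x. f x \<partial>M) = (\<integral>x. f x \<partial>M')" if "f \<in> CK" for f
    using all_CK[OF assms(1,3,4,5) that] .
  show ?thesis
  proof (rule measure_eqI_generator_eq[where E="{K. E_compact K}" and \<Omega>=Espace and A=A])
    show "Int_stable {K. E_compact K}"
      by (auto simp: Int_stable_def E_compact_def)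
    show "{K. E_compact K} \<subseteq> Pow Espace" using E_compact_sub by auto
    show "emeasure M X = emeasure M' X" if "X \<in> {K. E_compact K}" for X
      using compact_eq[OF assms(3,4) allCK] that by auto
    show "sets M = sigma_sets Espace {K. E_compact K}" by (rule sets_radon_gen[OF assms(3)])
    show "sets M' = sigma_sets Espace {K. E_compact K}" by (rule sets_radon_gen[OF assms(4)])
    show "range A \<subseteq> {K. E_compact K}" using AE by auto
    show "(\<Union>i. A i) = Espace" by (rule Aun)
    show "emeasure M (A i) \<noteq> \<infinity>" for i using assms(3) AE[of i] by (auto simp: radon_def)
  qed
qed

end
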